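(* Let $n\ge3$, let $e_1,\dots,e_n\ge1$ be integers, let $p$ be a prime with $p>\max\{e_1,\dots,e_n\}$, and let $R$ be a nonzero $\mathbf F_p$-algebra (commutative, unital). If $\max\{e_1,\dots,e_n\}>1$, then $G_{R,n;e_1,\dots,e_n}$ contains an elementary abelian $p$-group of infinite rank; in particular it is infinite.
   Context: For distinct $i,j$, $e\ge0$, $r\in R$: $\alpha_{i;j}^{(e)}(r)\in\mathrm{Aut}(R[x_1,\dots,x_n])$ maps $x_i\mapsto x_i+rx_j^e$ and fixes $x_\ell$ for $\ell\ne i$. $G_{R,n;e_1,\dots,e_n}$ is the subgroup generated by $\{\alpha_{i;i+1}^{(e_i)}(r): 1\le i\le n, r\in R\}$, indices modulo $n$. *)

theory Defs
  imports "HOL-Library.Poly_Mapping" "HOL-Computational_Algebra.Primes"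
begin

text \<open>Multivariate polynomials over a commutative ring 'r in the variables x_0, x_1, ...:
  a monomial is a finitely supported exponent vector, a polynomial a
  finitely supported coefficient function on monomials (convolution product from Poly_Mapping).\<close>

type_synonym 'r mpoly = "(nat \<Rightarrow>\<^sub>0 nat) \<Rightarrow>\<^sub>0 'r"

definition MConst :: "'r::comm_ring_1 \<Rightarrow> 'r mpoly" where
  "MConst c = Poly_Mapping.single 0 c"

definition MVar :: "nat \<Rightarrow> 'r::comm_ring_1 mpoly" where
  "MVar i = Poly_Mapping.single (Poly_Mapping.single i 1) 1"

definition subst :: "(nat \<Rightarrow> 'r::comm_ring_1 mpoly) \<Rightarrow> 'r mpoly \<Rightarrow> 'r mpoly" where
  "subst s p = (\<Sum>mon\<in>Poly_Mapping.keys p. MConst (Poly_Mapping.lookup p mon) * (\<Prod>v\<in>Poly_Mapping.keys mon. (s v) ^ (Poly_Mapping.lookup mon v)))"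

definition alpha :: "nat \<Rightarrow> nat \<Rightarrow> nat \<Rightarrow> 'r::comm_ring_1 \<Rightarrow> 'r mpoly \<Rightarrow> 'r mpoly" where
  "alpha i j e r = subst (\<lambda>l. if l = i then MVar i + MConst r * MVar j ^ e else MVar l)"

text \<open>Generators of G_{R,n;e}, with indices 0..n-1 (cyclically, i+1 taken mod n).\<close>
definition gens :: "nat \<Rightarrow> (nat \<Rightarrow> nat) \<Rightarrow> ('r::comm_ring_1 mpoly \<Rightarrow> 'r mpoly) set" where
  "gens n e = {alpha i (Suc i mod n) (e i) r | i r. i < n}"

inductive_set gen_group :: "('a \<Rightarrow> 'a) set \<Rightarrow> ('a \<Rightarrow> 'a) set" for S where
  gen_id: "id \<in> gen_group S"
| gen_mult: "g \<in> S \<Longrightarrow> f \<in> gen_group S \<Longrightarrow> g \<circ> f \<in> gen_group S"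
| gen_inv: "g \<in> S \<Longrightarrow> f \<in> gen_group S \<Longrightarrow> inv g \<circ> f \<in> gen_group S"

definition G_group :: "nat \<Rightarrow> (nat \<Rightarrow> nat) \<Rightarrow> ('r::comm_ring_1 mpoly \<Rightarrow> 'r mpoly) set" where
  "G_group n e = gen_group (gens n e)"

definition elem_abelian_p_group :: "nat \<Rightarrow> ('a \<Rightarrow> 'a) set \<Rightarrow> bool" where
  "elem_abelian_p_group p H \<longleftrightarrow>
     H \<noteq> {} \<and> (\<forall>h\<in>H. bij h) \<and>
     (\<forall>f\<in>H. \<forall>g\<in>H. f \<circ> g \<in> H) \<and> (\<forall>h\<in>H. inv h \<in> H) \<and>
     (\<forall>f\<in>H. \<forall>g\<in>H. f \<circ> g = g \<circ> f) \<and> (\<forall>h\<in>H. h ^^ p = id)"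

end

theory Submission
  imports Defs
begin


definition mmono :: "(nat \<Rightarrow> 'r::comm_ring_1 mpoly) \<Rightarrow> (nat \<Rightarrow>\<^sub>0 nat) \<Rightarrow> 'r mpoly" where
  "mmono s m = (\<Prod>v\<in>Poly_Mapping.keys m. (s v) ^ (Poly_Mapping.lookup m v))"

lemma subst_mono: "subst s p = (\<Sum>m\<in>Poly_Mapping.keys p. MConst (Poly_Mapping.lookup p m) * mmono s m)"
  by (simp add: subst_def mmono_def)

lemma MConst_0[simp]: "MConst 0 = 0" by (simp add: MConst_def)
lemma MConst_1[simp]: "MConst 1 = 1" by (simp add: MConst_def)
lemma MConst_add: "MConst (a + b) = MConst a + MConst b" by (simp add: MConst_def single_add)
lemma MConst_mult: "MConst (a * b) = MConst a * MConst b" by (simp add: MConst_def mult_single)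
lemma MConst_uminus: "MConst (- a) = - MConst a" by (simp add: MConst_def single_uminus)
lemma MConst_of_nat: "MConst (of_nat k) = of_nat k" by (simp add: MConst_def)
lemma MConst_of_int: "MConst (of_int k) = of_int k" by (simp add: MConst_def)

lemma mmono_superset:
  assumes "finite V" "Poly_Mapping.keys m \<subseteq> V"
  shows "mmono s m = (\<Prod>v\<in>V. (s v) ^ (Poly_Mapping.lookup m v))"
  unfolding mmono_def
  by (rule prod.mono_neutral_left) (use assms in \<open>auto simp: in_keys_iff\<close>)

lemma mmono_add: "mmono s (a + b) = mmono s a * mmono s b"
proof -
  let ?V = "Poly_Mapping.keys a \<union> Poly_Mapping.keys b"
  have "mmono s (a + b) = (\<Prod>v\<in>?V. (s v) ^ (Poly_Mapping.lookup (a+b) v))"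
    by (rule mmono_superset) (auto dest: subsetD[OF keys_add])
  also have "\<dots> = (\<Prod>v\<in>?V. (s v) ^ (Poly_Mapping.lookup a v) * (s v) ^ (Poly_Mapping.lookup b v))"
    by (simp add: lookup_add power_add)
  also have "\<dots> = mmono s a * mmono s b"
    by (simp add: prod.distrib mmono_superset[of ?V])
  finally show ?thesis .
qed

lemma mmono_zero[simp]: "mmono s 0 = 1" by (simp add: mmono_def)

lemma subst_superset:
  assumes "finite S" "Poly_Mapping.keys p \<subseteq> S"
  shows "subst s p = (\<Sum>m\<in>S. MConst (Poly_Mapping.lookup p m) * mmono s m)"
  unfolding subst_mono
  by (rule sum.mono_neutral_left) (use assms in \<open>auto simp: in_keys_iff\<close>)

lemma subst_add: "subst s (p + q) = subst s p + subst s q"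
proof -
  let ?S = "Poly_Mapping.keys p \<union> Poly_Mapping.keys q"
  have "subst s (p + q) = (\<Sum>m\<in>?S. MConst (Poly_Mapping.lookup (p+q) m) * mmono s m)"
    by (rule subst_superset) (auto dest: subsetD[OF keys_add])
  also have "\<dots> = subst s p + subst s q"
    by (simp add: lookup_add MConst_add distrib_right sum.distrib subst_superset[of ?S])
  finally show ?thesis .
qed

lemma subst_zero[simp]: "subst s 0 = 0" by (simp add: subst_def)

lemma subst_sum: "subst s (\<Sum>i\<in>I. f i) = (\<Sum>i\<in>I. subst s (f i))"
  by (induction I rule: infinite_finite_induct) (auto simp: subst_add)

lemma subst_single: "subst s (Poly_Mapping.single m c) = MConst c * mmono s m"
  by (simp add: subst_def mmono_def)

lemma poly_expand: "p = (\<Sum>m\<in>Poly_Mapping.keys p. Poly_Mapping.single m (Poly_Mapping.lookup p m))"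
proof (rule poly_mapping_eqI)
  fix k
  have "Poly_Mapping.lookup (\<Sum>m\<in>Poly_Mapping.keys p. Poly_Mapping.single m (Poly_Mapping.lookup p m)) k
     = (\<Sum>m\<in>Poly_Mapping.keys p. if m = k then Poly_Mapping.lookup p m else 0)"
    by (simp add: lookup_sum lookup_single when_def)
  also have "\<dots> = Poly_Mapping.lookup p k"
    by (simp add: sum.delta in_keys_iff)
  finally show "Poly_Mapping.lookup p k = Poly_Mapping.lookup (\<Sum>m\<in>Poly_Mapping.keys p. Poly_Mapping.single m (Poly_Mapping.lookup p m)) k" by simp
qed

lemma subst_mult: "subst s (p * q) = subst s p * subst s q"
proof -
  have "p * q = (\<Sum>a\<in>Poly_Mapping.keys p. \<Sum>b\<in>Poly_Mapping.keys q.
       Poly_Mapping.single (a + b) (Poly_Mapping.lookup p a * Poly_Mapping.lookup q b))"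
  proof -
    have "p * q = (\<Sum>a\<in>Poly_Mapping.keys p. Poly_Mapping.single a (Poly_Mapping.lookup p a))
        * (\<Sum>b\<in>Poly_Mapping.keys q. Poly_Mapping.single b (Poly_Mapping.lookup q b))"
      by (simp flip: poly_expand)
    also have "\<dots> = (\<Sum>a\<in>Poly_Mapping.keys p. \<Sum>b\<in>Poly_Mapping.keys q.
       Poly_Mapping.single (a + b) (Poly_Mapping.lookup p a * Poly_Mapping.lookup q b))"
      by (simp add: sum_product mult_single)
    finally show ?thesis .
  qed
  then have "subst s (p * q) = (\<Sum>a\<in>Poly_Mapping.keys p. \<Sum>b\<in>Poly_Mapping.keys q.
       MConst (Poly_Mapping.lookup p a) * mmono s a * (MConst (Poly_Mapping.lookup q b) * mmono s b))"
    by (simp add: subst_sum subst_single mmono_add MConst_mult mult_ac)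
  also have "\<dots> = subst s p * subst s q"
    unfolding subst_mono sum_distrib_left sum_distrib_right by (rule sum.swap)
  finally show ?thesis .
qed

lemma subst_one[simp]: "subst s 1 = 1"
  by (simp add: subst_def)

lemma subst_MConst[simp]: "subst s (MConst c) = MConst c"
  by (simp add: MConst_def subst_single)

lemma subst_MVar[simp]: "subst s (MVar i) = s i"
  by (simp add: MVar_def subst_single mmono_def)

lemma subst_power: "subst s (p ^ k) = subst s p ^ k"
  by (induction k) (simp_all add: subst_mult)

lemma subst_uminus: "subst s (- p) = - subst s p"
proof -
  have "subst s (- p) + subst s p = subst s (- p + p)" by (rule subst_add[symmetric])
  also have "\<dots> = 0" by simp
  finally show ?thesis by (rule eq_neg_iff_add_eq_0[THEN iffD2])
qed

lemma subst_diff: "subst s (p - q) = subst s p - subst s q"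
  by (simp only: diff_conv_add_uminus subst_add subst_uminus)

lemma subst_of_nat[simp]: "subst s (of_nat k) = of_nat k"
  by (induction k) (simp_all add: subst_add)

lemma subst_of_int[simp]: "subst s (of_int k) = of_int k"
  using subst_MConst[of s "of_int k"] by (simp only: MConst_of_int)

lemma subst_prod: "subst s (\<Prod>i\<in>I. f i) = (\<Prod>i\<in>I. subst s (f i))"
  by (induction I rule: infinite_finite_induct) (auto simp: subst_mult)

lemma subst_mono_hom: "subst s (mmono t m) = mmono (\<lambda>v. subst s (t v)) m"
  by (simp add: mmono_def subst_prod subst_power)

lemma subst_comp: "subst s (subst t p) = subst (\<lambda>v. subst s (t v)) p"
  unfolding subst_mono[of t p] subst_mono[of "\<lambda>v. subst s (t v)" p]
  by (simp add: subst_sum subst_mult subst_mono_hom)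

lemma prod_single_one: "(\<Prod>v\<in>V. Poly_Mapping.single (f v) (1::'r::comm_ring_1)) = Poly_Mapping.single (\<Sum>v\<in>V. f v) 1"
  by (induction V rule: infinite_finite_induct) (auto simp: mult_single)

lemma MVar_power: "MVar v ^ k = Poly_Mapping.single (Poly_Mapping.single v k) (1::'r::comm_ring_1)"
  by (induction k) (simp_all add: MVar_def mult_single single_add[symmetric] add.commute)

lemma mmono_MVar: "mmono MVar m = Poly_Mapping.single m (1::'r::comm_ring_1)"
proof -
  have "mmono MVar m = (\<Prod>v\<in>Poly_Mapping.keys m. Poly_Mapping.single (Poly_Mapping.single v (Poly_Mapping.lookup m v)) (1::'r))"
    by (simp add: mmono_def MVar_power)
  also have "\<dots> = Poly_Mapping.single (\<Sum>v\<in>Poly_Mapping.keys m. Poly_Mapping.single v (Poly_Mapping.lookup m v)) 1"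
    by (rule prod_single_one)
  finally show ?thesis by (simp flip: poly_expand)
qed

lemma subst_id_poly: "subst MVar p = p"
proof -
  have "subst MVar p = (\<Sum>m\<in>Poly_Mapping.keys p. Poly_Mapping.single m (Poly_Mapping.lookup p m))"
    by (simp add: subst_mono MConst_def mult_single mmono_MVar)
  also have "\<dots> = p" by (rule poly_expand[symmetric])
  finally show ?thesis .
qed

lemma subst_id: "subst MVar = id"
  by (rule ext) (simp add: subst_id_poly)

lemma subst_cong:
  assumes "\<And>m v. m \<in> Poly_Mapping.keys p \<Longrightarrow> v \<in> Poly_Mapping.keys m \<Longrightarrow> s v = t v"
  shows "subst s p = subst t p"
  unfolding subst_def using assms by (intro sum.cong refl arg_cong2[where f="(*)"] prod.cong) auto



definition Tm :: "nat \<Rightarrow> 'r::comm_ring_1 mpoly \<Rightarrow> nat \<Rightarrow> 'r mpoly" where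
  "Tm i f = (\<lambda>l. if l = i then MVar i + f else MVar l)"

definition T :: "nat \<Rightarrow> 'r::comm_ring_1 mpoly \<Rightarrow> 'r mpoly \<Rightarrow> 'r mpoly" where
  "T i f = subst (Tm i f)"

lemma alpha_T: "alpha i j e r = T i (MConst r * MVar j ^ e)"
  by (simp add: alpha_def T_def Tm_def)

definition free :: "nat \<Rightarrow> 'r::comm_ring_1 mpoly \<Rightarrow> bool" where
  "free i p \<longleftrightarrow> (\<forall>m\<in>Poly_Mapping.keys p. Poly_Mapping.lookup m i = 0)"

lemma free_0[simp]: "free i 0" by (simp add: free_def)
lemma free_MConst[simp]: "free i (MConst c)" by (simp add: free_def MConst_def)
lemma free_MVar[simp]: "j \<noteq> i \<Longrightarrow> free i (MVar j)"
  by (simp add: free_def MVar_def lookup_single)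
lemma free_add[simp]:
  assumes "free i p" "free i q" shows "free i (p + q)"
  unfolding free_def
proof
  fix m assume "m \<in> Poly_Mapping.keys (p + q)"
  then have "m \<in> Poly_Mapping.keys p \<union> Poly_Mapping.keys q" using keys_add[of p q] by (rule subsetD[rotated])
  then show "Poly_Mapping.lookup m i = 0" using assms unfolding free_def by blast
qed
lemma free_mult[simp]:
  assumes "free i p" "free i q" shows "free i (p * q)"
  unfolding free_def
proof
  fix m assume "m \<in> Poly_Mapping.keys (p * q)"
  then have "m \<in> {a + b |a b. a \<in> Poly_Mapping.keys p \<and> b \<in> Poly_Mapping.keys q}"
    using keys_mult[of p q] by (rule subsetD[rotated])
  then obtain a b where "m = a + b" "a \<in> Poly_Mapping.keys p" "b \<in> Poly_Mapping.keys q" by blast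
  then show "Poly_Mapping.lookup m i = 0" using assms unfolding free_def by (simp add: lookup_add)
qed
lemma free_uminus[simp]: "free i p \<Longrightarrow> free i (- p)"
  unfolding free_def by simp
lemma free_diff[simp]: "free i p \<Longrightarrow> free i q \<Longrightarrow> free i (p - q)"
  by (simp only: diff_conv_add_uminus free_add free_uminus)
lemma free_1[simp]: "free i 1" using free_MConst[of i 1] by simp
lemma free_power[simp]: "free i p \<Longrightarrow> free i (p ^ k)"
  by (induction k) simp_all
lemma free_of_nat[simp]: "free i (of_nat k)"
  using free_MConst[of i "of_nat k"] by (simp only: MConst_of_nat)
lemma free_of_int[simp]: "free i (of_int k)"
  using free_MConst[of i "of_int k"] by (simp only: MConst_of_int)
lemma free_sum: "(\<And>x. x \<in> A \<Longrightarrow> free i (f x)) \<Longrightarrow> free i (\<Sum>x\<in>A. f x)"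
  by (induction A rule: infinite_finite_induct) auto
lemma free_prod: "(\<And>x. x \<in> A \<Longrightarrow> free i (f x)) \<Longrightarrow> free i (\<Prod>x\<in>A. f x)"
  by (induction A rule: infinite_finite_induct) auto

lemma free_subst:
  assumes "free i p" "\<And>v. v \<noteq> i \<Longrightarrow> free i (s v)"
  shows "free i (subst s p)"
  unfolding subst_def
proof (rule free_sum)
  fix m assume m: "m \<in> Poly_Mapping.keys p"
  then have "Poly_Mapping.lookup m i = 0" using assms(1) by (simp add: free_def)
  then have "v \<in> Poly_Mapping.keys m \<Longrightarrow> v \<noteq> i" for v by (auto simp: in_keys_iff)
  then show "free i (MConst (Poly_Mapping.lookup p m) * (\<Prod>v\<in>Poly_Mapping.keys m. s v ^ Poly_Mapping.lookup m v))"
    using assms(2) by (intro free_mult free_MConst free_prod free_power) auto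
qed

lemma subst_fix:
  assumes "\<And>m v. m \<in> Poly_Mapping.keys p \<Longrightarrow> v \<in> Poly_Mapping.keys m \<Longrightarrow> s v = MVar v"
  shows "subst s p = p"
proof -
  have "subst s p = subst MVar p" by (rule subst_cong) (use assms in auto)
  then show ?thesis by (simp add: subst_id_poly)
qed

lemma subst_fix_free:
  assumes "free i p" "\<And>v. v \<noteq> i \<Longrightarrow> s v = MVar v"
  shows "subst s p = p"
proof (rule subst_fix)
  fix m v assume "m \<in> Poly_Mapping.keys p" "v \<in> Poly_Mapping.keys m"
  then have "v \<noteq> i" using assms(1) by (auto simp: free_def in_keys_iff)
  then show "s v = MVar v" using assms(2) by simp
qed

lemma T_fix: "free i p \<Longrightarrow> T i f p = p"
  unfolding T_def by (rule subst_fix_free) (auto simp: Tm_def)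

lemma T_MVar_i: "T i f (MVar i) = MVar i + f"
  by (simp add: T_def Tm_def)

lemma T_MVar_other: "v \<noteq> i \<Longrightarrow> T i f (MVar v) = MVar v"
  by (simp add: T_def Tm_def)

lemma T_zero: "T i (0::'r::comm_ring_1 mpoly) = id"
proof -
  have "Tm i (0::'r mpoly) = MVar" by (auto simp: Tm_def)
  then show ?thesis unfolding T_def by (simp only: subst_id)
qed

lemma comp_subst: "subst s \<circ> subst t = subst (\<lambda>v. subst s (t v))"
  by (rule ext) (simp add: subst_comp)

lemma T_comp:
  assumes "free i f" "free i g"
  shows "T i f \<circ> T i g = T i (f + g)"
proof -
  have "(\<lambda>v. subst (Tm i f) (Tm i g v)) = Tm i (f + g)"
  proof
    fix v
    show "subst (Tm i f) (Tm i g v) = Tm i (f + g) v"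
    proof (cases "v = i")
      case True
      have "subst (Tm i f) g = g" using T_fix[OF assms(2)] by (simp add: T_def)
      then show ?thesis using True by (simp add: Tm_def subst_add add.assoc)
    qed (simp add: Tm_def)
  qed
  then show ?thesis by (simp add: T_def comp_subst)
qed

lemma T_conj:
  assumes "i \<noteq> j" "free i h" "free j h" "free i f"
  shows "T j h \<circ> T i f \<circ> T j (- h) = T i (T j h f)"
proof -
  have "(\<lambda>v. subst (Tm j h) (subst (Tm i f) (Tm j (- h) v))) = Tm i (T j h f)"
  proof
    fix v
    show "subst (Tm j h) (subst (Tm i f) (Tm j (- h) v)) = Tm i (T j h f) v"
    proof (cases "v = j")
      case True
      have 1: "subst (Tm i f) h = h" using T_fix[of i h f] assms by (simp add: T_def)
      have 2: "subst (Tm j h) h = h" using T_fix[of j h h] assms by (simp add: T_def)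
      have 3: "subst (Tm i f) (MVar j) = MVar j" "subst (Tm j h) (MVar j) = MVar j + h"
        using assms(1) by (auto simp: Tm_def)
      have "Tm j (- h) v = MVar j - h" using True by (simp add: Tm_def)
      then show ?thesis using True assms(1) 1 2 3 by (simp add: subst_diff Tm_def)
    next
      case False
      then show ?thesis using assms(1) by (auto simp: Tm_def subst_add T_def)
    qed
  qed
  moreover have "T j h \<circ> T i f \<circ> T j (- h) = subst (\<lambda>v. subst (Tm j h) (subst (Tm i f) (Tm j (- h) v)))"
    by (rule ext) (simp add: T_def subst_comp)
  ultimately show ?thesis by (simp add: T_def)
qed

lemma T_inj:
  assumes "T i f = T i g" shows "f = g"
proof -
  have "T i f (MVar i) = T i g (MVar i)" using assms by simp
  then show ?thesis by (simp add: T_MVar_i)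
qed

lemma T_inverse: "free i f \<Longrightarrow> T i f \<circ> T i (- f) = id"
  by (simp add: T_comp T_zero)

lemma T_bij: "free i f \<Longrightarrow> bij (T i f)"
proof (rule o_bij[of "T i (- f)"])
  assume "free i f"
  then show "T i (- f) \<circ> T i f = id" using T_inverse[of i "-f"] by simp
  show "T i f \<circ> T i (- f) = id" using T_inverse[of i f] \<open>free i f\<close> by simp
qed

lemma T_inv: "free i f \<Longrightarrow> inv (T i f) = T i (- f)"
proof (rule inv_unique_comp)
  assume "free i f"
  then show "T i (- f) \<circ> T i f = id" using T_inverse[of i "-f"] by simp
  show "T i f \<circ> T i (- f) = id" using T_inverse[of i f] \<open>free i f\<close> by simp
qed

lemma T_pow: "free i f \<Longrightarrow> (T i f) ^^ k = T i (of_nat k * f)"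
proof (induction k)
  case 0 then show ?case by (simp add: T_zero)
next
  case (Suc k)
  then have "(T i f) ^^ Suc k = T i f \<circ> T i (of_nat k * f)" by simp
  also have "\<dots> = T i (f + of_nat k * f)" using Suc by (simp add: T_comp)
  also have "f + of_nat k * f = of_nat (Suc k) * f" by (simp add: algebra_simps)
  finally show ?case .
qed

lemma gen_group_comp:
  assumes "f \<in> gen_group S" "g \<in> gen_group S"
  shows "f \<circ> g \<in> gen_group S"
  using assms(1)
proof (induction rule: gen_group.induct)
  case gen_id then show ?case using assms(2) by simp
next
  case (gen_mult g' f')
  have "g' \<circ> (f' \<circ> g) \<in> gen_group S" by (rule gen_group.gen_mult[OF gen_mult(1) gen_mult(3)])
  then show ?case by (simp only: comp_assoc)
next
  case (gen_inv g' f')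
  have "inv g' \<circ> (f' \<circ> g) \<in> gen_group S" by (rule gen_group.gen_inv[OF gen_inv(1) gen_inv(3)])
  then show ?case by (simp only: comp_assoc)
qed

lemma gen_group_gen: "g \<in> S \<Longrightarrow> g \<in> gen_group S"
  using gen_group.gen_mult[OF _ gen_group.gen_id] by simp

lemma alpha_in_G:
  assumes "i < n"
  shows "T i (MConst r * MVar (Suc i mod n) ^ e i) \<in> G_group n e"
  unfolding G_group_def
  by (rule gen_group_gen) (use assms in \<open>auto simp: gens_def alpha_T\<close>)

lemma G_comp: "f \<in> G_group n e \<Longrightarrow> g \<in> G_group n e \<Longrightarrow> f \<circ> g \<in> G_group n e"
  unfolding G_group_def by (rule gen_group_comp)

lemma G_id: "id \<in> G_group n e"
  unfolding G_group_def by (rule gen_group.gen_id)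

lemma G_pow: "f \<in> G_group n e \<Longrightarrow> f ^^ k \<in> G_group n e"
  by (induction k) (simp_all add: G_id G_comp)

lemma G_T_sum:
  fixes N :: nat and f :: "nat \<Rightarrow> 'r::comm_ring_1 mpoly"
  assumes "\<And>r. r < N \<Longrightarrow> T i (f r) \<in> G_group n e" "\<And>r. r < N \<Longrightarrow> free i (f r)"
  shows "T i (\<Sum>r<N. f r) \<in> G_group n e"
  using assms
proof (induction N)
  case 0 then show ?case by (simp only: lessThan_0 sum.empty T_zero G_id)
next
  case (Suc N)
  have "T i (f N) \<circ> T i (\<Sum>r<N. f r) = T i (f N + (\<Sum>r<N. f r))"
    using Suc.prems by (intro T_comp free_sum) auto
  then have "T i (\<Sum>r<Suc N. f r) = T i (f N) \<circ> T i (\<Sum>r<N. f r)"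
    by (simp add: add.commute)
  moreover have "T i (f N) \<in> G_group n e" using Suc.prems by simp
  moreover have "T i (\<Sum>r<N. f r) \<in> G_group n e" using Suc by simp
  ultimately show ?case by (metis G_comp)
qed

lemma G_conj:
  assumes "i \<noteq> j" "free i h" "free j h" "free i f"
    and "T j h \<in> G_group n e" "T j (- h) \<in> G_group n e" "T i f \<in> G_group n e"
  shows "T i (T j h f) \<in> G_group n e"
  using T_conj[OF assms(1-4)] G_comp[OF G_comp[OF assms(5) assms(7)] assms(6)] by simp



definition dsum :: "nat \<Rightarrow> (nat \<Rightarrow> 'a::comm_ring_1) \<Rightarrow> 'a" where
  "dsum m g = (\<Sum>r\<le>m. (-1) ^ r * of_nat (m choose r) * g r)"

lemma dsum_Suc: "dsum (Suc m) g = dsum m g - dsum m (\<lambda>r. g (Suc r))"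
proof -
  have "dsum (Suc m) g = g 0 + (\<Sum>s\<le>m. (-1) ^ Suc s * of_nat (Suc m choose Suc s) * g (Suc s))"
    unfolding dsum_def by (subst sum.atMost_Suc_shift) simp
  also have "\<dots> = g 0 - (\<Sum>s\<le>m. (-1) ^ s * of_nat (m choose s) * g (Suc s))
                      - (\<Sum>s\<le>m. (-1) ^ s * of_nat (m choose Suc s) * g (Suc s))"
  proof -
    have "(-1) ^ Suc s * of_nat (Suc m choose Suc s) * g (Suc s)
       = - ((-1) ^ s * of_nat (m choose s) * g (Suc s)) - ((-1) ^ s * of_nat (m choose Suc s) * g (Suc s))" for s
      by (simp add: algebra_simps)
    then show ?thesis by (simp add: sum_subtractf sum_negf)
  qed
  also have "g 0 - (\<Sum>s\<le>m. (-1) ^ s * of_nat (m choose Suc s) * g (Suc s)) = dsum m g"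
  proof -
    have "dsum m g = (\<Sum>r\<le>Suc m. (-1) ^ r * of_nat (m choose r) * g r)"
      unfolding dsum_def by (simp add: sum.atMost_Suc binomial_eq_0)
    also have "\<dots> = g 0 + (\<Sum>s\<le>m. (-1) ^ Suc s * of_nat (m choose Suc s) * g (Suc s))"
      by (subst sum.atMost_Suc_shift) simp
    also have "\<dots> = g 0 - (\<Sum>s\<le>m. (-1) ^ s * of_nat (m choose Suc s) * g (Suc s))"
      by (simp add: sum_negf)
    finally show ?thesis by simp
  qed
  ultimately show ?thesis unfolding dsum_def by (simp add: algebra_simps)
qed

lemma dsum_linear:
  "dsum m (\<lambda>r. a * f r + b * g r) = a * dsum m f + b * dsum m g"
  unfolding dsum_def by (simp add: sum.distrib sum_distrib_left algebra_simps)

lemma dsum_power: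
  fixes x y :: "'a::comm_ring_1"
  shows "\<forall>k\<le>m. \<forall>x. dsum m (\<lambda>r. (x + of_nat r * y) ^ k) = (if k = m then (-1) ^ m * of_nat (fact m) * y ^ m else 0)"
proof (induction m)
  case 0
  then show ?case by (simp add: dsum_def)
next
  case (Suc m)
  have A: "dsum (Suc m) (\<lambda>r. (x + of_nat r * y) ^ k) = 0" if "k \<le> m" for k x
  proof -
    have "dsum (Suc m) (\<lambda>r. (x + of_nat r * y) ^ k)
        = dsum m (\<lambda>r. (x + of_nat r * y) ^ k) - dsum m (\<lambda>r. ((x + y) + of_nat r * y) ^ k)"
      by (simp add: dsum_Suc algebra_simps)
    also have "\<dots> = 0" using Suc.IH that by simp
    finally show ?thesis .
  qed
  have B: "dsum (Suc m) (\<lambda>r. (x + of_nat r * y) ^ Suc m) = (-1) ^ Suc m * of_nat (fact (Suc m)) * y ^ Suc m" for x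
  proof -
    have "dsum (Suc m) (\<lambda>r. (x + of_nat r * y) ^ Suc m)
        = dsum (Suc m) (\<lambda>r. x * (x + of_nat r * y) ^ m + y * (of_nat r * (x + of_nat r * y) ^ m))"
      by (simp add: algebra_simps)
    also have "\<dots> = x * dsum (Suc m) (\<lambda>r. (x + of_nat r * y) ^ m) + y * dsum (Suc m) (\<lambda>r. of_nat r * (x + of_nat r * y) ^ m)"
      by (rule dsum_linear)
    also have "dsum (Suc m) (\<lambda>r. (x + of_nat r * y) ^ m) = 0" using A by simp
    also have "dsum (Suc m) (\<lambda>r. of_nat r * (x + of_nat r * y) ^ m)
       = (\<Sum>s\<le>m. (-1) ^ Suc s * of_nat (Suc m choose Suc s) * (of_nat (Suc s) * ((x + y) + of_nat s * y) ^ m))"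
      unfolding dsum_def by (subst sum.atMost_Suc_shift) (simp add: algebra_simps)
    also have "\<dots> = - of_nat (Suc m) * dsum m (\<lambda>r. ((x + y) + of_nat r * y) ^ m)"
    proof -
      have cu: "of_nat (Suc m choose Suc s) * of_nat (Suc s) = (of_nat (Suc m) * of_nat (m choose s) :: 'a)" for s
        using Suc_times_binomial_eq[of m s] by (metis of_nat_mult)
      have gen: "(-1) ^ Suc s * c * (u * z) = - ((-1) ^ s * z * (c * u))" for s and c u z :: 'a
        by (simp add: algebra_simps)
      have "(-1) ^ Suc s * of_nat (Suc m choose Suc s) * (of_nat (Suc s) * ((x + y) + of_nat s * y) ^ m)
          = - of_nat (Suc m) * ((-1) ^ s * of_nat (m choose s) * ((x + y) + of_nat s * y) ^ m)" for s
        unfolding gen cu by (simp add: algebra_simps)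
      then show ?thesis unfolding dsum_def
        by (simp add: sum_distrib_left)
    qed
    also have "dsum m (\<lambda>r. ((x + y) + of_nat r * y) ^ m) = (-1) ^ m * of_nat (fact m) * y ^ m"
      using Suc.IH by simp
    finally show ?thesis by (simp add: algebra_simps)
  qed
  show ?case
  proof (intro allI impI)
    fix k x assume "k \<le> Suc m"
    then show "dsum (Suc m) (\<lambda>r. (x + of_nat r * y) ^ k) = (if k = Suc m then (-1) ^ Suc m * of_nat (fact (Suc m)) * y ^ Suc m else 0)"
      using A B by (cases "k = Suc m") auto
  qed
qed

lemma dsum_top:
  fixes x y :: "'a::comm_ring_1"
  shows "(\<Sum>r\<le>m. (-1) ^ r * of_nat (m choose r) * (x + of_nat r * y) ^ m) = (-1) ^ m * of_nat (fact m) * y ^ m"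
  using dsum_power[of m y] unfolding dsum_def by simp

lemma unit_fact:
  assumes "prime p" "a < p" "of_nat p = (0::'r::comm_ring_1)"
  shows "\<exists>w::'r. w * ((-1) ^ a * of_nat (fact a)) = 1"
proof -
  have "\<not> p dvd fact a" using assms(1,2) by (simp add: prime_dvd_fact_iff)
  then have "coprime p (fact a)" using assms(1) by (intro prime_imp_coprime)
  then have "gcd (fact a) p = 1" by (simp add: coprime_iff_gcd_eq_1 gcd.commute)
  then have "gcd (int (fact a)) (int p) = 1" by (simp only: gcd_int_int_eq)
  then obtain u v :: int where uv: "u * int (fact a) + v * int p = 1" using bezout_int by metis
  then have "of_int (u * int (fact a) + v * int p) = (1::'r)" by simp
  then have "of_int u * of_nat (fact a) + of_int v * of_nat p = (1::'r)"
    by (simp only: of_int_add of_int_mult of_int_1 of_int_of_nat_eq)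
  then have "of_int u * of_nat (fact a) = (1::'r)" using assms(3) by simp
  then have "(of_int u * (-1) ^ a) * ((-1) ^ a * of_nat (fact a)) = (1::'r)"
    by (simp add: algebra_simps flip: power_add mult_2)
  then show ?thesis by blast
qed



lemma MConst_power: "MConst (x ^ k) = MConst x ^ k"
  by (induction k) (simp_all add: MConst_mult)

lemma T_apply_mon: "T j h (MConst c * MVar j ^ a) = MConst c * (MVar j + h) ^ a"
  by (simp add: T_def Tm_def subst_mult subst_power)

lemma extract_lem:
  fixes h :: "'r::comm_ring_1 mpoly"
  assumes ij: "i \<noteq> j" and p: "prime p" "a < p" "of_nat p = (0::'r)"
    and fh: "free i h" "free j h"
    and Gi: "\<And>c::'r. T i (MConst c * MVar j ^ a) \<in> G_group n e"
    and Gj: "\<And>r::'r. T j (MConst r * h) \<in> G_group n e"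
  shows "T i (MConst c * h ^ a) \<in> G_group n e"
proof -
  obtain w::'r where w: "w * ((-1) ^ a * of_nat (fact a)) = 1" using unit_fact[OF p] by blast
  define cr where "cr r = c * w * (-1) ^ r * of_nat (a choose r)" for r
  define F where "F r = MConst (cr r) * (MVar j + MConst (of_nat r) * h) ^ a" for r
  have F_G: "T i (F r) \<in> G_group n e" for r
  proof -
    have neg: "- (MConst (of_nat r) * h) = MConst (- of_nat r) * h" by (simp add: MConst_uminus)
    have "T i (T j (MConst (of_nat r) * h) (MConst (cr r) * MVar j ^ a)) \<in> G_group n e"
    proof (rule G_conj)
      show "T j (- (MConst (of_nat r) * h)) \<in> G_group n e" unfolding neg by (rule Gj)
      show "T i (MConst (cr r) * MVar j ^ a) \<in> G_group n e" by (rule Gi)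
      show "T j (MConst (of_nat r) * h) \<in> G_group n e" by (rule Gj)
    qed (use ij fh in auto)
    then show ?thesis by (simp add: F_def T_apply_mon)
  qed
  have F_free: "free i (F r)" for r using ij fh by (simp add: F_def)
  have "T i (\<Sum>r<Suc a. F r) \<in> G_group n e"
    by (rule G_T_sum) (use F_G F_free in auto)
  moreover have "(\<Sum>r<Suc a. F r) = MConst c * h ^ a"
  proof -
    have "MConst (cr r) = MConst (c * w) * ((-1) ^ r * of_nat (a choose r))" for r
      by (simp add: cr_def MConst_mult MConst_power MConst_uminus MConst_of_nat mult.assoc)
    then have "(\<Sum>r<Suc a. F r) = (\<Sum>r\<le>a. MConst (c * w) * ((-1) ^ r * of_nat (a choose r) * (MVar j + of_nat r * h) ^ a))"
      by (simp add: F_def lessThan_Suc_atMost MConst_of_nat mult.assoc)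
    also have "\<dots> = MConst (c * w) * ((-1) ^ a * of_nat (fact a) * h ^ a)"
      by (simp add: dsum_top flip: sum_distrib_left)
    also have "\<dots> = MConst (c * (w * ((-1) ^ a * of_nat (fact a)))) * h ^ a"
      by (simp add: MConst_mult MConst_power MConst_uminus MConst_of_nat mult.assoc)
    also have "\<dots> = MConst c * h ^ a" using w by simp
    finally show ?thesis .
  qed
  ultimately show ?thesis by simp
qed

definition Pe :: "nat \<Rightarrow> (nat \<Rightarrow> nat) \<Rightarrow> nat \<Rightarrow> nat" where
  "Pe n e i = (\<Prod>l\<in>{i..<n}. e l) * e 0"

lemma chain:
  assumes n: "n \<ge> 3" and ep: "\<forall>i<n. e i < p" and p: "prime p" "of_nat p = (0::'r::comm_ring_1)"
    and i: "2 \<le> i" "i \<le> n"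
  shows "\<forall>c::'r. T (i mod n) (MConst c * MVar 1 ^ Pe n e i) \<in> G_group n e"
  using i(2)
proof (induction i rule: inc_induct)
  case base
  show ?case
  proof
    fix c :: 'r
    have "T 0 (MConst c * MVar (Suc 0 mod n) ^ e 0) \<in> G_group n e"
      using alpha_in_G[of 0 n c e] n by simp
    then show "T (n mod n) (MConst c * MVar 1 ^ Pe n e n) \<in> G_group n e"
      using n by (simp add: Pe_def)
  qed
next
  case (step m)
  have m2: "m \<ge> 2" using step.hyps i(1) by simp
  have mn: "m < n" using step.hyps by simp
  define j where "j = Suc m mod n"
  have j1: "j \<noteq> 1" "j \<noteq> m" using m2 mn n by (auto simp: j_def mod_Suc)
  have "T m (MConst c * (MVar 1 ^ Pe n e (Suc m)) ^ e m) \<in> G_group n e" for c :: 'r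
  proof (rule extract_lem[OF _ p(1) _ p(2)])
    show "m \<noteq> j" using j1 by simp
    show "e m < p" using ep mn by simp
    show "free m (MVar 1 ^ Pe n e (Suc m))" using m2 by simp
    show "free j (MVar 1 ^ Pe n e (Suc m))" using j1 by simp
    show "T m (MConst c * MVar j ^ e m) \<in> G_group n e" for c :: 'r
      using alpha_in_G[OF mn, of c e] by (simp add: j_def)
    show "T j (MConst r * MVar 1 ^ Pe n e (Suc m)) \<in> G_group n e" for r :: 'r
      using step.IH by (simp add: j_def)
  qed
  moreover have "(MVar 1 ^ Pe n e (Suc m)) ^ e m = (MVar 1 ^ Pe n e m :: 'r mpoly)"
    using mn by (simp add: Pe_def prod.atLeast_Suc_lessThan power_mult[symmetric] mult_ac)
  ultimately show ?case using mn by simp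
qed



definition wt :: "(nat \<Rightarrow> nat) \<Rightarrow> (nat \<Rightarrow>\<^sub>0 nat) \<Rightarrow> nat" where
  "wt w m = (\<Sum>v\<in>Poly_Mapping.keys m. Poly_Mapping.lookup m v * w v)"

lemma wt_superset:
  assumes "finite V" "Poly_Mapping.keys m \<subseteq> V"
  shows "wt w m = (\<Sum>v\<in>V. Poly_Mapping.lookup m v * w v)"
  unfolding wt_def
  by (rule sum.mono_neutral_left) (use assms in \<open>auto simp: in_keys_iff\<close>)

lemma wt_add: "wt w (a + b) = wt w a + wt w b"
proof -
  let ?V = "Poly_Mapping.keys a \<union> Poly_Mapping.keys b"
  have "wt w (a + b) = (\<Sum>v\<in>?V. Poly_Mapping.lookup (a + b) v * w v)"
    by (rule wt_superset) (auto dest: subsetD[OF keys_add])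
  also have "\<dots> = wt w a + wt w b"
    by (simp add: lookup_add add_mult_distrib sum.distrib wt_superset[of ?V])
  finally show ?thesis .
qed

lemma wt_zero[simp]: "wt w 0 = 0" by (simp add: wt_def)

lemma wt_single: "wt w (Poly_Mapping.single v k) = k * w v"
  by (simp add: wt_def)

lemma wt_ge_lookup: "Poly_Mapping.lookup m a * w a \<le> wt w m"
proof -
  have "wt w m = (\<Sum>v\<in>insert a (Poly_Mapping.keys m). Poly_Mapping.lookup m v * w v)"
    by (rule wt_superset) auto
  also have "\<dots> \<ge> Poly_Mapping.lookup m a * w a"
    by (rule member_le_sum) auto
  finally show ?thesis .
qed

lemma wt_upd: "wt (w(a := c)) m + Poly_Mapping.lookup m a * w a = wt w m + Poly_Mapping.lookup m a * c"
proof -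
  let ?V = "insert a (Poly_Mapping.keys m)"
  have fin: "finite ?V" by simp
  have "wt (w(a := c)) m = Poly_Mapping.lookup m a * c + (\<Sum>v\<in>?V - {a}. Poly_Mapping.lookup m v * w v)"
    using wt_superset[OF fin subset_insertI, of "w(a := c)"] sum.remove[OF fin, of a "\<lambda>v. Poly_Mapping.lookup m v * (w(a := c)) v"]
    by simp
  moreover have "wt w m = Poly_Mapping.lookup m a * w a + (\<Sum>v\<in>?V - {a}. Poly_Mapping.lookup m v * w v)"
    using wt_superset[OF fin subset_insertI, of w] sum.remove[OF fin, of a "\<lambda>v. Poly_Mapping.lookup m v * w v"]
    by simp
  ultimately show ?thesis by simp
qed

definition WB :: "(nat \<Rightarrow> nat) \<Rightarrow> nat \<Rightarrow> 'r::comm_ring_1 mpoly \<Rightarrow> bool" where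
  "WB w W p \<longleftrightarrow> (\<forall>m\<in>Poly_Mapping.keys p. wt w m \<le> W)"

definition SB :: "(nat \<Rightarrow> nat) \<Rightarrow> nat \<Rightarrow> 'r::comm_ring_1 mpoly \<Rightarrow> bool" where
  "SB w W p \<longleftrightarrow> (\<forall>m\<in>Poly_Mapping.keys p. wt w m < W)"

lemma keys_add_mem: "m \<in> Poly_Mapping.keys (p + q) \<Longrightarrow> m \<in> Poly_Mapping.keys p \<or> m \<in> Poly_Mapping.keys q"
  using keys_add[of p q] by auto

lemma WB_add: "WB w W p \<Longrightarrow> WB w W q \<Longrightarrow> WB w W (p + q)"
  unfolding WB_def by (metis keys_add_mem)

lemma SB_add: "SB w W p \<Longrightarrow> SB w W q \<Longrightarrow> SB w W (p + q)"
  unfolding SB_def by (metis keys_add_mem)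

lemma SB_0[simp]: "SB w W 0" by (simp add: SB_def)
lemma WB_0[simp]: "WB w W 0" by (simp add: WB_def)

lemma WB_mono: "WB w W p \<Longrightarrow> W \<le> W' \<Longrightarrow> WB w W' p"
  unfolding WB_def by force

lemma SB_WB: "SB w W p \<Longrightarrow> WB w W p"
  unfolding SB_def WB_def by force

lemma WB_SB: "WB w W p \<Longrightarrow> W < W' \<Longrightarrow> SB w W' p"
  unfolding SB_def WB_def by force

lemma keys_mult_obtain:
  assumes "m \<in> Poly_Mapping.keys (p * q)"
  obtains a b where "m = a + b" "a \<in> Poly_Mapping.keys p" "b \<in> Poly_Mapping.keys q"
proof -
  have "m \<in> {a + b |a b. a \<in> Poly_Mapping.keys p \<and> b \<in> Poly_Mapping.keys q}"
    using keys_mult[of p q] assms by (rule subsetD)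
  then show ?thesis using that by blast
qed

lemma WB_mult: "WB w W1 p \<Longrightarrow> WB w W2 q \<Longrightarrow> WB w (W1 + W2) (p * q)"
  unfolding WB_def by (auto elim!: keys_mult_obtain simp: wt_add intro!: add_mono)

lemma SB_mult_l: "SB w W1 p \<Longrightarrow> WB w W2 q \<Longrightarrow> SB w (W1 + W2) (p * q)"
  unfolding WB_def SB_def by (auto elim!: keys_mult_obtain simp: wt_add intro!: add_less_le_mono)

lemma SB_mult_r: "WB w W1 p \<Longrightarrow> SB w W2 q \<Longrightarrow> SB w (W1 + W2) (p * q)"
  unfolding WB_def SB_def by (auto elim!: keys_mult_obtain simp: wt_add intro!: add_le_less_mono)

lemma WB_MConst: "WB w 0 (MConst c)"
  by (simp add: WB_def MConst_def)

lemma WB_one: "WB w 0 1"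
  using WB_MConst[of w 1] by simp

lemma WB_of_nat: "WB w 0 (of_nat k)"
  using WB_MConst[of w "of_nat k"] by (simp add: MConst_of_nat)

lemma WB_MVar: "WB w (w v) (MVar v)"
  by (simp add: WB_def MVar_def wt_single)

lemma WB_power: "WB w W p \<Longrightarrow> WB w (k * W) (p ^ k)"
proof (induction k)
  case 0 then show ?case using WB_one by simp
next
  case (Suc k)
  then have "WB w (W + k * W) (p * p ^ k)" by (intro WB_mult)
  then show ?case by simp
qed

lemma WB_sum: "(\<And>x. x \<in> A \<Longrightarrow> WB w W (f x)) \<Longrightarrow> WB w W (\<Sum>x\<in>A. f x)"
  by (induction A rule: infinite_finite_induct) (auto intro: WB_add)

lemma SB_sum: "(\<And>x. x \<in> A \<Longrightarrow> SB w W (f x)) \<Longrightarrow> SB w W (\<Sum>x\<in>A. f x)"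
  by (induction A rule: infinite_finite_induct) (auto intro: SB_add)

lemma WB_prod: "(\<And>x. x \<in> A \<Longrightarrow> WB w (g x) (f x)) \<Longrightarrow> WB w (\<Sum>x\<in>A. g x) (\<Prod>x\<in>A. f x)"
proof (induction A rule: infinite_finite_induct)
  case (infinite A) then show ?case using WB_one by simp
next
  case empty then show ?case using WB_one by simp
next
  case (insert x F)
  then show ?case by (simp add: WB_mult)
qed

lemma SB_subst:
  assumes B: "\<And>v. WB w (B v) (s v)" and m: "\<And>m. m \<in> Poly_Mapping.keys p \<Longrightarrow> wt B m < W"
  shows "SB w W (subst s p)"
  unfolding subst_def
proof (rule SB_sum)
  fix m assume "m \<in> Poly_Mapping.keys p"
  have "WB w (0 + wt B m) (MConst (Poly_Mapping.lookup p m) * (\<Prod>v\<in>Poly_Mapping.keys m. s v ^ Poly_Mapping.lookup m v))"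
    unfolding wt_def by (intro WB_mult WB_MConst WB_prod WB_power B)
  then show "SB w W (MConst (Poly_Mapping.lookup p m) * (\<Prod>v\<in>Poly_Mapping.keys m. s v ^ Poly_Mapping.lookup m v))"
    using m[OF \<open>m \<in> _\<close>] by (auto intro: WB_SB)
qed

lemma lookup_MVar_power: "Poly_Mapping.lookup (MVar y ^ N :: 'r::comm_ring_1 mpoly) (Poly_Mapping.single y N) = 1"
  by (simp add: MVar_power)

lemma WB_MVar_power: "WB w (N * w y) (MVar y ^ N)"
  using WB_power[OF WB_MVar[of w y], of N] .



lemma diff_mult_add: "j \<le> N \<Longrightarrow> (N - j) * c + j * c = N * (c::nat)"
  by (simp add: add_mult_distrib[symmetric])

lemma henon_step:
  fixes L :: "'r::comm_ring_1 mpoly"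
  assumes ab: "a \<noteq> b" and wa: "0 < w a" and wab: "w a < k * w b" and N: "N \<ge> 1"
    and L: "SB w (N * w a) L"
  shows "\<exists>L'. subst (Tm a (MVar b ^ k)) (MVar a ^ N + L) = MVar b ^ (k * N) + L' \<and> SB w (k * N * w b) L'"
proof -
  let ?s = "Tm a (MVar b ^ k) :: nat \<Rightarrow> 'r mpoly"
  obtain N' where N': "N = Suc N'" using N by (cases N) auto
  have 1: "subst ?s (MVar a ^ N) = (MVar a + MVar b ^ k) ^ N"
    by (simp add: subst_power Tm_def)
  define R where "R = (\<Sum>i\<le>N'. of_nat (N choose Suc i) * MVar a ^ Suc i * (MVar b ^ k) ^ (N - Suc i) :: 'r mpoly)"
  have 2: "(MVar a + MVar b ^ k) ^ N = MVar b ^ (k * N) + R"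
  proof -
    have "(MVar a + MVar b ^ k) ^ N = (\<Sum>i\<le>N. of_nat (N choose i) * MVar a ^ i * (MVar b ^ k) ^ (N - i) :: 'r mpoly)"
      by (rule binomial_ring)
    also have "\<dots> = MVar b ^ (k * N) + R"
      unfolding R_def N' by (subst sum.atMost_Suc_shift) (simp add: power_mult[symmetric] mult.commute power_add)
    finally show ?thesis .
  qed
  have R: "SB w (k * N * w b) R"
    unfolding R_def
  proof (rule SB_sum)
    fix i assume "i \<in> {..N'}"
    then have iN: "Suc i \<le> N" using N' by simp
    have ineq: "0 + Suc i * w a + (k * (N - Suc i)) * w b < k * N * w b"
    proof -
      have a1: "Suc i * w a < Suc i * (k * w b)" using wab by (rule mult_less_mono2) simp
      have a2: "(N - Suc i) * (k * w b) + Suc i * (k * w b) = N * (k * w b)"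
        using iN by (rule diff_mult_add)
      have a3: "(k * (N - Suc i)) * w b = (N - Suc i) * (k * w b)" "k * N * w b = N * (k * w b)"
        by (simp_all add: mult_ac)
      show ?thesis using a1 a2 a3 by linarith
    qed
    show "SB w (k * N * w b) (of_nat (N choose Suc i) * MVar a ^ Suc i * (MVar b ^ k) ^ (N - Suc i))"
      apply (rule WB_SB[OF _ ineq])
      unfolding power_mult[symmetric]
      by (intro WB_mult WB_of_nat WB_MVar_power)
  qed
  have 3: "SB w (k * N * w b) (subst ?s L)"
  proof (rule SB_subst[where B = "w(a := k * w b)"])
    fix v
    show "WB w ((w(a := k * w b)) v) (?s v)"
    proof (cases "v = a")
      case True
      have "WB w (k * w b) (MVar a :: 'r mpoly)" by (rule WB_mono[OF WB_MVar]) (use wab in simp)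
      moreover have "WB w (k * w b) (MVar b ^ k :: 'r mpoly)" by (rule WB_MVar_power)
      ultimately show ?thesis using True by (simp add: Tm_def WB_add)
    next
      case False
      then show ?thesis by (simp add: Tm_def WB_MVar)
    qed
  next
    fix m assume m: "m \<in> Poly_Mapping.keys L"
    let ?x = "Poly_Mapping.lookup m a"
    have f1: "wt (w(a := k * w b)) m + ?x * w a = wt w m + ?x * (k * w b)" by (rule wt_upd)
    have f2: "?x * w a \<le> wt w m" by (rule wt_ge_lookup)
    have f3: "wt w m < N * w a" using L m by (simp add: SB_def)
    have "?x * w a < N * w a" using f2 f3 by linarith
    then have xN: "?x \<le> N" by (simp add: less_imp_le)
    have f4: "(N - ?x) * w a + ?x * w a = N * w a" using xN by (rule diff_mult_add)
    have f5: "(N - ?x) * (k * w b) + ?x * (k * w b) = N * (k * w b)" using xN by (rule diff_mult_add)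
    have f6: "(N - ?x) * w a \<le> (N - ?x) * (k * w b)" using wab by simp
    have f7: "k * N * w b = N * (k * w b)" by (simp add: mult_ac)
    show "wt (w(a := k * w b)) m < k * N * w b" using f1 f2 f3 f4 f5 f6 f7 by linarith
  qed
  have "subst ?s (MVar a ^ N + L) = MVar b ^ (k * N) + (R + subst ?s L)"
    by (simp add: subst_add 1 2 add.assoc)
  moreover have "SB w (k * N * w b) (R + subst ?s L)" using R 3 by (rule SB_add)
  ultimately show ?thesis by blast
qed

lemma top_power:
  fixes L :: "'r::comm_ring_1 mpoly"
  assumes L: "SB w (N * w y) L" and e: "e \<ge> 1"
  shows "\<exists>L''. (MVar y ^ N + L) ^ e = MVar y ^ (N * e) + L'' \<and> SB w (N * e * w y) L''"
  using e
proof (induction e)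
  case 0 then show ?case by simp
next
  case (Suc e)
  show ?case
  proof (cases "e = 0")
    case True then show ?thesis using L by auto
  next
    case False
    then obtain L1 where L1: "(MVar y ^ N + L) ^ e = MVar y ^ (N * e) + L1" "SB w (N * e * w y) L1"
      using Suc by auto
    have "(MVar y ^ N + L) ^ Suc e = (MVar y ^ N + L) * (MVar y ^ (N * e) + L1)"
      using L1 by simp
    also have "\<dots> = MVar y ^ (N * Suc e) + (MVar y ^ N * L1 + L * MVar y ^ (N * e) + L * L1)"
      by (simp add: algebra_simps power_add)
    finally have eq: "(MVar y ^ N + L) ^ Suc e = MVar y ^ (N * Suc e) + (MVar y ^ N * L1 + L * MVar y ^ (N * e) + L * L1)" .
    have W: "N * Suc e * w y = N * w y + N * e * w y" by (simp add: algebra_simps)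
    have "SB w (N * w y + N * e * w y) (MVar y ^ N * L1 + L * MVar y ^ (N * e) + L * L1)"
      by (intro SB_add SB_mult_r SB_mult_l WB_MVar_power L L1(2) SB_WB)
    then show ?thesis using eq W by auto
  qed
qed

lemma top_lookup:
  fixes L :: "'r::comm_ring_1 mpoly"
  assumes "SB w (M * w y) L"
  shows "Poly_Mapping.lookup (MVar y ^ M + L) (Poly_Mapping.single y M) = 1"
proof -
  have "Poly_Mapping.single y M \<notin> Poly_Mapping.keys L"
    using assms by (auto simp: SB_def wt_single)
  then show ?thesis by (simp add: lookup_add lookup_MVar_power in_keys_iff)
qed

lemma top_WB:
  fixes L :: "'r::comm_ring_1 mpoly"
  assumes "SB w (M * w y) L"
  shows "WB w (M * w y) (MVar y ^ M + L)"
  using WB_MVar_power assms by (blast intro: WB_add SB_WB)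



fun Qs :: "nat \<Rightarrow> nat \<Rightarrow> nat \<Rightarrow> 'r::comm_ring_1 mpoly" where
  "Qs D e1 0 = MVar 1"
| "Qs D e1 (Suc k) = subst (if even k then Tm 1 (MVar 2 ^ e1) else Tm 2 (MVar 1 ^ D)) (Qs D e1 k)"

fun Ns :: "nat \<Rightarrow> nat \<Rightarrow> nat \<Rightarrow> nat" where
  "Ns D e1 0 = 1"
| "Ns D e1 (Suc k) = (if even k then e1 else D) * Ns D e1 k"

definition ys :: "nat \<Rightarrow> nat" where "ys k = (if even k then 1 else 2)"

definition om :: "nat \<Rightarrow> nat \<Rightarrow> nat" where
  "om e1 v = (if v = 1 then 2 * e1 else if v = 2 then 3 else 0)"

lemma Qs_shape:
  assumes e1: "e1 \<ge> 1" and D: "D \<ge> 1" and eD: "e1 * D \<ge> 2"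
  shows "Ns D e1 k \<ge> 1 \<and> (\<exists>L. Qs D e1 k = (MVar (ys k) ^ Ns D e1 k :: 'r::comm_ring_1 mpoly) + L
            \<and> SB (om e1) (Ns D e1 k * om e1 (ys k)) L)"
proof (induction k)
  case 0
  have "Qs D e1 0 = (MVar (ys 0) ^ Ns D e1 0 :: 'r mpoly) + 0" by (simp add: ys_def)
  then show ?case by (auto simp: ys_def)
next
  case (Suc k)
  then obtain L where N1: "Ns D e1 k \<ge> 1" and Q: "Qs D e1 k = (MVar (ys k) ^ Ns D e1 k :: 'r mpoly) + L"
      and L: "SB (om e1) (Ns D e1 k * om e1 (ys k)) L" by blast
  show ?case
  proof (cases "even k")
    case True
    have "\<exists>L'. subst (Tm 1 (MVar 2 ^ e1)) (MVar 1 ^ Ns D e1 k + L) = (MVar 2 ^ (e1 * Ns D e1 k) :: 'r mpoly) + L'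
        \<and> SB (om e1) (e1 * Ns D e1 k * om e1 2) L'"
      by (rule henon_step) (use e1 N1 L True in \<open>auto simp: om_def ys_def\<close>)
    then show ?thesis using True Q N1 e1 by (auto simp: ys_def)
  next
    case False
    have "\<exists>L'. subst (Tm 2 (MVar 1 ^ D)) (MVar 2 ^ Ns D e1 k + L) = (MVar 1 ^ (D * Ns D e1 k) :: 'r mpoly) + L'
        \<and> SB (om e1) (D * Ns D e1 k * om e1 1) L'"
    proof (rule henon_step)
      have "D * (2 * e1) = 2 * (e1 * D)" by simp
      then have "3 < D * (2 * e1)" using eD by linarith
      then show "om e1 2 < D * om e1 1" by (simp add: om_def)
    qed (use e1 N1 L False in \<open>auto simp: om_def ys_def\<close>)
    then show ?thesis using False Q N1 D by (auto simp: ys_def)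
  qed
qed

lemma W_increasing:
  assumes e1: "e1 \<ge> 1" and D: "D \<ge> 1" and eD: "e1 * D \<ge> 2" and N: "Ns D e1 k \<ge> 1"
  shows "Ns D e1 k * om e1 (ys k) < Ns D e1 (Suc k) * om e1 (ys (Suc k))"
proof (cases "even k")
  case True
  have "Ns D e1 k * (2 * e1) < Ns D e1 k * (3 * e1)" using N e1 by simp
  then show ?thesis using True by (simp add: om_def ys_def mult_ac)
next
  case False
  have "3 < 2 * (e1 * D)" using eD by simp
  then have "Ns D e1 k * 3 < Ns D e1 k * (2 * (e1 * D))" using N by simp
  then show ?thesis using False by (simp add: om_def ys_def mult_ac)
qed

lemma Qs_group:
  fixes e :: "nat \<Rightarrow> nat"
  assumes n: "n \<ge> 3" and ep: "\<forall>i<n. e i < p" and p: "prime p" "of_nat p = (0::'r::comm_ring_1)"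
  shows "free 0 (Qs (Pe n e 2) (e 1) k :: 'r mpoly) \<and> (\<forall>c::'r. T 0 (MConst c * Qs (Pe n e 2) (e 1) k ^ e 0) \<in> G_group n e)"
proof (induction k)
  case 0
  have "T 0 (MConst c * MVar (Suc 0 mod n) ^ e 0) \<in> G_group n e" for c :: 'r
    using alpha_in_G[of 0 n c e] n by simp
  then show ?case using n by simp
next
  case (Suc k)
  let ?Q = "Qs (Pe n e 2) (e 1) k :: 'r mpoly"
  have fQ: "free 0 ?Q" and GQ: "\<And>c::'r. T 0 (MConst c * ?Q ^ e 0) \<in> G_group n e" using Suc by auto
  have conj: "T 0 (MConst c * (subst (Tm j h) ?Q) ^ e 0) \<in> G_group n e"
    if j: "j \<noteq> 0" and h: "free 0 h" "free j h" and Gh: "\<And>r::'r. T j (MConst r * h) \<in> G_group n e" for j h c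
  proof -
    have "T 0 (T j h (MConst c * ?Q ^ e 0)) \<in> G_group n e"
    proof (rule G_conj)
      show "T j h \<in> G_group n e" using Gh[of 1] by simp
      show "T j (- h) \<in> G_group n e" using Gh[of "-1"] by (simp add: MConst_uminus)
      show "T 0 (MConst c * ?Q ^ e 0) \<in> G_group n e" by (rule GQ)
    qed (use j h fQ in auto)
    then show ?thesis by (simp add: T_def subst_mult subst_power)
  qed
  have fS: "free 0 (subst (Tm j h) ?Q)" if "j \<noteq> 0" "free 0 h" for j h
    by (rule free_subst[OF fQ]) (use that in \<open>auto simp: Tm_def\<close>)
  show ?case
  proof (cases "even k")
    case True
    have G1: "T 1 (MConst r * MVar 2 ^ e 1) \<in> G_group n e" for r :: 'r
      using alpha_in_G[of 1 n r e] n by (simp add: numeral_2_eq_2)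
    show ?thesis using True conj[of 1 "MVar 2 ^ e 1", OF _ _ _ G1] fS[of 1 "MVar 2 ^ e 1"] by simp
  next
    case False
    have G2: "T 2 (MConst r * MVar 1 ^ Pe n e 2) \<in> G_group n e" for r :: 'r
      using chain[OF n ep p, of 2] n by simp
    show ?thesis using False conj[of 2 "MVar 1 ^ Pe n e 2", OF _ _ _ G2] fS[of 2 "MVar 1 ^ Pe n e 2"] by simp
  qed
qed



lemma of_nat_p_mpoly: "of_nat p = (0::'r::comm_ring_1) \<Longrightarrow> (of_nat p :: 'r mpoly) = 0"
  by (metis MConst_0 MConst_of_nat)

theorem mainTheorem10:
  fixes n p :: nat and e :: "nat \<Rightarrow> nat"
  assumes "n \<ge> 3"
    and "\<forall>i<n. e i \<ge> 1"
    and "prime p"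
    and "\<forall>i<n. e i < p"
    and "of_nat p = (0::'r::comm_ring_1)"
    and "(0::'r) \<noteq> 1"
    and "\<exists>i<n. e i > 1"
  shows "\<exists>H \<subseteq> (G_group n e :: ('r mpoly \<Rightarrow> 'r mpoly) set).
           elem_abelian_p_group p H \<and> infinite H"
proof -
  note n = assms(1) and e1n = assms(2) and p = assms(3) and ep = assms(4) and p0 = assms(5)
    and nz = assms(6) and big = assms(7)
  let ?G = "G_group n e :: ('r mpoly \<Rightarrow> 'r mpoly) set"
  define H where "H = {T 0 f | f :: 'r mpoly. free 0 f \<and> T 0 f \<in> ?G}"
  have p0m: "(of_nat p :: 'r mpoly) = 0" using p0 by (rule of_nat_p_mpoly)
  have p1: "p \<ge> 1" using p prime_gt_0_nat by (simp add: Suc_leI)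
  have pm1: "(of_nat (p - 1) :: 'r mpoly) = - 1"
  proof -
    have "(of_nat (p - 1) :: 'r mpoly) + 1 = of_nat p" using p1 by (simp add: of_nat_diff)
    then show ?thesis using p0m by (simp add: eq_neg_iff_add_eq_0)
  qed
  have HG: "H \<subseteq> ?G" unfolding H_def by blast
  have ab: "elem_abelian_p_group p H"
    unfolding elem_abelian_p_group_def
  proof (intro conjI ballI)
    show "H \<noteq> {}"
    proof -
      have "T 0 (0::'r mpoly) \<in> ?G" using G_id by (simp add: T_zero)
      then have "T 0 (0::'r mpoly) \<in> H" unfolding H_def by auto
      then show ?thesis by blast
    qed
  next
    fix h assume "h \<in> H"
    then obtain f where f: "h = T 0 f" "free 0 f" "T 0 f \<in> ?G" unfolding H_def by blast
    show "bij h" using f by (simp add: T_bij)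
    show "inv h \<in> H"
    proof -
      have "T 0 f ^^ (p - 1) \<in> ?G" using f by (simp add: G_pow)
      moreover have "T 0 f ^^ (p - 1) = T 0 (- f)"
        using f(2) T_pow[of 0 f "p - 1"] pm1 by simp
      ultimately have "T 0 (- f) \<in> ?G" by simp
      then show ?thesis using f unfolding H_def by (auto simp: T_inv)
    qed
    show "h ^^ p = id" using f by (simp add: T_pow p0m T_zero)
  next
    fix f g assume "f \<in> H" "g \<in> H"
    then obtain a b where a: "f = T 0 a" "free 0 a" "T 0 a \<in> ?G" and b: "g = T 0 b" "free 0 b" "T 0 b \<in> ?G"
      unfolding H_def by blast
    show "f \<circ> g \<in> H"
    proof -
      have "T 0 a \<circ> T 0 b \<in> ?G" using a b by (simp add: G_comp)
      then show ?thesis using a b unfolding H_def by (auto simp: T_comp)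
    qed
    show "f \<circ> g = g \<circ> f" using a b by (simp add: T_comp add.commute)
  qed
  define e1 where "e1 = e 1"
  define D where "D = Pe n e 2"
  have e1: "e1 \<ge> 1" using e1n n by (simp add: e1_def)
  have prodall: "(\<Prod>l\<in>{0..<n}. e l) = e1 * D"
  proof -
    have "(\<Prod>l\<in>{0..<n}. e l) = e 0 * (e 1 * (\<Prod>l\<in>{2..<n}. e l))"
      using n by (simp add: prod.atLeast_Suc_lessThan numeral_2_eq_2)
    then show ?thesis by (simp add: e1_def D_def Pe_def mult_ac)
  qed
  have prodpos: "(\<Prod>l\<in>{0..<n}. e l) > 0" using e1n by (intro prod_pos) (auto simp: Suc_le_eq)
  have eD: "e1 * D \<ge> 2"
  proof -
    obtain i where i: "i < n" "e i > 1" using big by blast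
    have "e i dvd (\<Prod>l\<in>{0..<n}. e l)" using i by (intro dvd_prodI) auto
    then have "e i \<le> (\<Prod>l\<in>{0..<n}. e l)" using prodpos by (rule dvd_imp_le)
    then show ?thesis using i prodall by simp
  qed
  have D: "D \<ge> 1" using eD by (cases D) auto
  have e0: "e 0 \<ge> 1" using e1n n by simp
  define F where "F k = T 0 (MConst (1::'r) * Qs D e1 k ^ e 0)" for k
  have FH: "F k \<in> H" for k
  proof -
    have A: "free 0 (Qs (Pe n e 2) (e 1) k :: 'r mpoly)"
      "T 0 (MConst (1::'r) * Qs (Pe n e 2) (e 1) k ^ e 0) \<in> ?G"
      using Qs_group[OF n ep p p0, of k] by blast+
    have "free 0 (MConst (1::'r) * Qs D e1 k ^ e 0)" using A(1) by (simp add: D_def e1_def)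
    moreover have "T 0 (MConst (1::'r) * Qs D e1 k ^ e 0) \<in> ?G" using A(2) by (simp only: D_def e1_def)
    ultimately show ?thesis unfolding H_def F_def by blast
  qed
  have shape: "Ns D e1 k \<ge> 1 \<and> (\<exists>L. Qs D e1 k = (MVar (ys k) ^ Ns D e1 k :: 'r mpoly) + L
            \<and> SB (om e1) (Ns D e1 k * om e1 (ys k)) L)" for k
    by (rule Qs_shape[OF e1 D eD])
  define W where "W k = Ns D e1 k * om e1 (ys k)" for k
  have Wmono: "W k < W k'" if "k < k'" for k k'
  proof -
    have "W i < W (Suc i)" for i
      unfolding W_def by (rule W_increasing[OF e1 D eD]) (use shape in blast)
    then show ?thesis using that by (rule lift_Suc_mono_less)
  qed
  have neq: "Qs D e1 k ^ e 0 \<noteq> (Qs D e1 k' ^ e 0 :: 'r mpoly)" if "k < k'" for k k'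
  proof
    assume eq: "Qs D e1 k ^ e 0 = (Qs D e1 k' ^ e 0 :: 'r mpoly)"
    obtain L' where L': "Qs D e1 k' = (MVar (ys k') ^ Ns D e1 k' :: 'r mpoly) + L'"
      "SB (om e1) (Ns D e1 k' * om e1 (ys k')) L'" using shape by blast
    obtain L'' where L'': "(MVar (ys k') ^ Ns D e1 k' + L') ^ e 0 = (MVar (ys k') ^ (Ns D e1 k' * e 0) :: 'r mpoly) + L''"
      "SB (om e1) (Ns D e1 k' * e 0 * om e1 (ys k')) L''"
      using top_power[OF L'(2) e0] by blast
    let ?M = "Poly_Mapping.single (ys k') (Ns D e1 k' * e 0)"
    have l1: "Poly_Mapping.lookup (Qs D e1 k' ^ e 0) ?M = (1::'r)"
      unfolding L'(1) L''(1) by (rule top_lookup[OF L''(2)])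
    obtain L where L: "Qs D e1 k = (MVar (ys k) ^ Ns D e1 k :: 'r mpoly) + L"
      "SB (om e1) (Ns D e1 k * om e1 (ys k)) L" using shape by blast
    obtain Lk where Lk: "(MVar (ys k) ^ Ns D e1 k + L) ^ e 0 = (MVar (ys k) ^ (Ns D e1 k * e 0) :: 'r mpoly) + Lk"
      "SB (om e1) (Ns D e1 k * e 0 * om e1 (ys k)) Lk"
      using top_power[OF L(2) e0] by blast
    have wb: "WB (om e1) (Ns D e1 k * e 0 * om e1 (ys k)) (Qs D e1 k ^ e 0 :: 'r mpoly)"
      unfolding L(1) Lk(1) by (rule top_WB[OF Lk(2)])
    have "W k * e 0 < W k' * e 0" using Wmono[OF that] e0 by simp
    then have "wt (om e1) ?M > Ns D e1 k * e 0 * om e1 (ys k)"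
      by (simp add: wt_single W_def mult_ac)
    then have "?M \<notin> Poly_Mapping.keys (Qs D e1 k ^ e 0 :: 'r mpoly)" using wb by (auto simp: WB_def)
    then have "Poly_Mapping.lookup (Qs D e1 k ^ e 0 :: 'r mpoly) ?M = 0" by (simp add: in_keys_iff)
    then show False using l1 eq nz by simp
  qed
  have "inj F"
  proof (rule injI)
    fix k k' assume "F k = F k'"
    then have eq: "Qs D e1 k ^ e 0 = (Qs D e1 k' ^ e 0 :: 'r mpoly)" unfolding F_def by (auto dest: T_inj)
    show "k = k'"
    proof (rule ccontr)
      assume "k \<noteq> k'"
      then consider "k < k'" | "k' < k" by linarith
      then show False using neq eq by cases metis+
    qed
  qed
  moreover have "range F \<subseteq> H" using FH by blast
  ultimately have "infinite H" using infinite_iff_countable_subset by blast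
  then show ?thesis using HG ab by blast
qed

end
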